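(* Let $P$ be a priority forest on $[n]_0$. The edge labeling of $I_P=[\hat0,P]$ given by the labels $\lambda$ (whose sequences along maximal chains are the Jordan–Hölder permutations) is an EL-labeling.
   Context: $[n]_0=\{0,\dots,n\}$. A priority forest on $[n]_0$ is a rooted forest with vertex set $[n]_0$ whose component trees $T_0,T_1,\dots$ are increasing (each non-root vertex has a larger label than its parent) and satisfy: for $j<k$ every label of $T_j$ is smaller than every label of $T_k$. $\Pi(n)$ is the poset of priority forests on $[n]_0$ ordered by inclusion of edge sets, with an extra top element; $\hat0$ is the edgeless forest. For priority forests $Q\lessdot Q'$ (i.e. $Q'$ is obtained from $Q$ by adding one edge), the label $\lambda(Q,Q')$ is the larger endpoint of the unique edge in $E(Q')\setminus E(Q)$. For a maximal chain $x=s_0\lessdot s_1\lessdot\cdots\lessdot s_k=y$ of an interval $[x,y]$, its label sequence is $(\lambda(s_0,s_1),\dots,\lambda(s_{k-1},s_k))$; the chain is increasing if this sequence is weakly increasing. An edge labeling of a poset is an EL-labeling if every interval $[x,y]$ has exactly one increasing maximal chain, and this chain's label sequence is lexicographically smaller than that of every other maximal chain of $[x,y]$. *)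

theory Defs
  imports Main
begin

text \<open>A forest on [n]_0 = {0..n} is represented by its set of directed edges (parent, child).  Rooted forest: every vertex has at most one parent
  (acyclicity is automatic since parents are smaller).\<close>

definition comp_of :: "nat \<Rightarrow> (nat \<times> nat) set \<Rightarrow> nat \<Rightarrow> nat set" where
  "comp_of n F x = {y. y \<le> n \<and> (x, y) \<in> (F \<union> F\<inverse>)\<^sup>*}"

definition priority_forest :: "nat \<Rightarrow> (nat \<times> nat) set \<Rightarrow> bool" where
  "priority_forest n F \<longleftrightarrow>
     F \<subseteq> {(a, b). a < b \<and> b \<le> n} \<and>
     (\<forall>a a' b. (a, b) \<in> F \<longrightarrow> (a', b) \<in> F \<longrightarrow> a = a') \<and>
     (\<forall>x\<le>n. \<forall>y\<le>n. comp_of n F x \<noteq> comp_of n F y \<longrightarrow>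
        (\<forall>u\<in>comp_of n F x. \<forall>v\<in>comp_of n F y. u < v) \<or>
        (\<forall>u\<in>comp_of n F x. \<forall>v\<in>comp_of n F y. v < u))"

definition lower_interval :: "nat \<Rightarrow> (nat \<times> nat) set \<Rightarrow> (nat \<times> nat) set set" where
  "lower_interval n P = {Q. priority_forest n Q \<and> Q \<subseteq> P}"

definition covers_in :: "(nat \<times> nat) set set \<Rightarrow> (nat \<times> nat) set \<Rightarrow> (nat \<times> nat) set \<Rightarrow> bool" where
  "covers_in S Q Q' \<longleftrightarrow> Q \<in> S \<and> Q' \<in> S \<and> Q \<subseteq> Q' \<and> card (Q' - Q) = 1"

definition forest_label :: "(nat \<times> nat) set \<Rightarrow> (nat \<times> nat) set \<Rightarrow> nat" where
  "forest_label Q Q' = snd (THE e. e \<in> Q' - Q)"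

definition max_chain :: "('a \<Rightarrow> 'a \<Rightarrow> bool) \<Rightarrow> 'a \<Rightarrow> 'a \<Rightarrow> 'a list \<Rightarrow> bool" where
  "max_chain cov x y cs \<longleftrightarrow> cs \<noteq> [] \<and> hd cs = x \<and> last cs = y \<and>
     (\<forall>i. Suc i < length cs \<longrightarrow> cov (cs ! i) (cs ! Suc i))"

definition label_seq :: "('a \<Rightarrow> 'a \<Rightarrow> 'l) \<Rightarrow> 'a list \<Rightarrow> 'l list" where
  "label_seq lab cs = map (\<lambda>i. lab (cs ! i) (cs ! Suc i)) [0..<length cs - 1]"

definition EL_labeling :: "'a set \<Rightarrow> ('a \<Rightarrow> 'a \<Rightarrow> bool) \<Rightarrow> ('a \<Rightarrow> 'a \<Rightarrow> bool)
    \<Rightarrow> ('a \<Rightarrow> 'a \<Rightarrow> 'l::linorder) \<Rightarrow> bool" where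
  "EL_labeling S le cov lab \<longleftrightarrow>
     (\<forall>x\<in>S. \<forall>y\<in>S. le x y \<longrightarrow>
        (\<exists>!cs. max_chain cov x y cs \<and> sorted (label_seq lab cs)) \<and>
        (\<forall>cs cs'. max_chain cov x y cs \<and> sorted (label_seq lab cs) \<and>
                  max_chain cov x y cs' \<and> cs' \<noteq> cs \<longrightarrow>
                  (label_seq lab cs, label_seq lab cs') \<in> lexord {(a, b). a < b}))"

end

theory Submission imports Defs begin

abbreviation rel :: "(nat \<times> nat) set \<Rightarrow> (nat \<times> nat) set" where
  "rel F \<equiv> (F \<union> F\<inverse>)\<^sup>*"

lemma rel_sym: "(a,b) \<in> rel F \<Longrightarrow> (b,a) \<in> rel F"
  by (metis converse_Un converse_converse rtrancl_converseI sup_commute)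

lemma rel_trans: "(a,b) \<in> rel F \<Longrightarrow> (b,c) \<in> rel F \<Longrightarrow> (a,c) \<in> rel F"
  by (rule rtrancl_trans)

lemma rel_bound:
  assumes "F \<subseteq> {(a, b). a < b \<and> b \<le> n}" "(a,b) \<in> rel F"
  shows "a = b \<or> (a \<le> n \<and> b \<le> n)"
  using assms(2)
proof (induction rule: rtrancl_induct)
  case base then show ?case by simp
next
  case (step b c)
  then have "b \<le> n \<and> c \<le> n" using assms(1) by auto
  then show ?case using step by auto
qed

lemma pf_inc: "priority_forest n F \<Longrightarrow> F \<subseteq> {(a, b). a < b \<and> b \<le> n}"
  unfolding priority_forest_def by blast

lemma pf_up: "priority_forest n F \<Longrightarrow> (a,b) \<in> F \<Longrightarrow> (a',b) \<in> F \<Longrightarrow> a = a'"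
  unfolding priority_forest_def by blast

lemma root_le:
  assumes inc: "F \<subseteq> {(a, b). a < b \<and> b \<le> n}"
    and up: "\<And>a a' b. (a,b) \<in> F \<Longrightarrow> (a',b) \<in> F \<Longrightarrow> a = a'"
    and np: "\<And>q. (q,s) \<notin> F" and st: "(s,t) \<in> rel F"
  shows "s \<le> t"
proof -
  have "(s,t) \<in> F\<^sup>*" using st
  proof (induction rule: rtrancl_induct)
    case base then show ?case by simp
  next
    case (step b c)
    show ?case
    proof (cases "(b,c) \<in> F")
      case True then show ?thesis using step by (meson rtrancl_into_rtrancl)
    next
      case False
      then have cb: "(c,b) \<in> F" using step by auto
      show ?thesis
      proof (cases "s = b")
        case True then show ?thesis using cb np by auto
      next
        case False
        then have "(s,b) \<in> F\<^sup>+" using step by (meson rtrancl_eq_or_trancl)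
        then obtain d where "(s,d) \<in> F\<^sup>*" "(d,b) \<in> F" by (meson tranclD2)
        then show ?thesis using up cb by metis
      qed
    qed
  qed
  then show ?thesis
  proof (induction rule: rtrancl_induct)
    case base then show ?case by simp
  next
    case (step b c) then show ?case using inc by fastforce
  qed
qed

lemma prio_conv:
  assumes pf: "priority_forest n F" and aw: "a \<le> w" and wb: "w \<le> b" and ab: "(a,b) \<in> rel F"
  shows "(a,w) \<in> rel F"
proof (rule ccontr)
  assume naw: "(a,w) \<notin> rel F"
  then have "a \<noteq> b" using ab wb aw by (metis le_antisym rtrancl.rtrancl_refl)
  then have bn: "a \<le> n" "b \<le> n" using rel_bound[OF pf_inc[OF pf] ab] by auto
  then have wn: "w \<le> n" using wb by simp
  have wc: "w \<in> comp_of n F w" unfolding comp_of_def using wn by simp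
  have "w \<notin> comp_of n F a" unfolding comp_of_def using naw by simp
  then have ne: "comp_of n F a \<noteq> comp_of n F w" using wc by blast
  have ac: "a \<in> comp_of n F a" "b \<in> comp_of n F a" unfolding comp_of_def using bn ab by auto
  from pf ne bn wn have
    "(\<forall>u\<in>comp_of n F a. \<forall>v\<in>comp_of n F w. u < v) \<or>
        (\<forall>u\<in>comp_of n F a. \<forall>v\<in>comp_of n F w. v < u)"
    unfolding priority_forest_def by blast
  then show False using ac wc aw wb by fastforce
qed

lemma conv_prio:
  assumes inc: "F \<subseteq> {(a, b). a < b \<and> b \<le> n}"
    and up: "\<And>a a' b. (a,b) \<in> F \<Longrightarrow> (a',b) \<in> F \<Longrightarrow> a = a'"
    and cv: "\<And>a w b. a \<le> w \<Longrightarrow> w \<le> b \<Longrightarrow> (a,b) \<in> rel F \<Longrightarrow> (a,w) \<in> rel F"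
  shows "priority_forest n F"
proof -
  have "\<forall>x\<le>n. \<forall>y\<le>n. comp_of n F x \<noteq> comp_of n F y \<longrightarrow>
        (\<forall>u\<in>comp_of n F x. \<forall>v\<in>comp_of n F y. u < v) \<or>
        (\<forall>u\<in>comp_of n F x. \<forall>v\<in>comp_of n F y. v < u)"
  proof (intro allI impI)
  fix x y assume xn: "x \<le> n" and yn: "y \<le> n" and ne: "comp_of n F x \<noteq> comp_of n F y"
  have nxy: "(x,y) \<notin> rel F"
  proof
    assume xy: "(x,y) \<in> rel F"
    have "comp_of n F x = comp_of n F y" unfolding comp_of_def
      using xy rel_sym[OF xy] rel_trans[where a=x and b=y] rel_trans[where a=y and b=x] by auto
    then show False using ne by simp
  qed
  show "(\<forall>u\<in>comp_of n F x. \<forall>v\<in>comp_of n F y. u < v) \<or>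
        (\<forall>u\<in>comp_of n F x. \<forall>v\<in>comp_of n F y. v < u)"
  proof (rule ccontr)
    assume "\<not> ?thesis"
    then obtain u1 v1 u2 v2 where u: "(x,u1) \<in> rel F" "(x,u2) \<in> rel F"
      and v: "(y,v1) \<in> rel F" "(y,v2) \<in> rel F" and le: "v1 \<le> u1" "u2 \<le> v2"
      unfolding comp_of_def by auto
    have uu: "(u2,u1) \<in> rel F" using u rel_sym rel_trans by metis
    have vv: "(v1,v2) \<in> rel F" using v rel_sym rel_trans by metis
    show False
    proof (cases "u1 \<le> v2")
      case True
      have "(v1,u1) \<in> rel F" using cv[OF le(1) True vv] .
      then show False using nxy u v rel_sym rel_trans by metis
    next
      case False
      then have "(u2,v2) \<in> rel F" using cv[OF le(2) _ uu] by simp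
      then show False using nxy u v rel_sym rel_trans by metis
    qed
  qed
  qed
  then show ?thesis unfolding priority_forest_def using inc up by (intro conjI; blast)
qed

lemma add_edge:
  assumes px: "priority_forest n x" and py: "priority_forest n y" and xy: "x \<subseteq> y"
    and ey: "(p,v) \<in> y" and ex: "(p,v) \<notin> x" and mn: "\<And>e. e \<in> y - x \<Longrightarrow> v \<le> snd e"
  shows "priority_forest n (insert (p,v) x)"
proof -
  define z where "z = insert (p,v) x"
  have incx: "x \<subseteq> {(a, b). a < b \<and> b \<le> n}" using pf_inc[OF px] .
  have incy: "y \<subseteq> {(a, b). a < b \<and> b \<le> n}" using pf_inc[OF py] .
  have pv: "p < v" "v \<le> n" using ey incy by auto
  have upx: "\<And>a a' b. (a,b) \<in> x \<Longrightarrow> (a',b) \<in> x \<Longrightarrow> a = a'" using pf_up[OF px] by blast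
  have upy: "\<And>a a' b. (a,b) \<in> y \<Longrightarrow> (a',b) \<in> y \<Longrightarrow> a = a'" using pf_up[OF py] by blast
  have vnp: "\<And>q. (q,v) \<notin> x" using upy xy ey ex by blast
  have xroot: "\<And>t. (v,t) \<in> rel x \<Longrightarrow> v \<le> t" using root_le[where F=x and n=n and s=v] incx upx vnp by blast
  have key: "(p,w) \<in> rel x" if w1: "p < w" and w2: "w < v" for w
  proof (rule ccontr)
    assume npw: "(p,w) \<notin> rel x"
    define w' where "w' = (LEAST t. (t,w) \<in> rel x)"
    have w'w: "(w',w) \<in> rel x" unfolding w'_def by (rule LeastI[of _ w]) simp
    have w'le: "w' \<le> w" unfolding w'_def by (rule Least_le) simp
    have pw': "p < w'"
    proof (rule ccontr)
      assume "\<not> p < w'"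
      then have "w' \<le> p" by simp
      then have "(w',p) \<in> rel x" using prio_conv[OF px _ _ w'w] w1 by simp
      then show False using npw w'w rel_sym rel_trans by metis
    qed
    have nq: "(q,w') \<notin> x" for q
    proof
      assume qw: "(q,w') \<in> x"
      then have "q < w'" using incx by auto
      moreover have "(q,w) \<in> rel x" using qw w'w
        by (meson UnI1 converse_rtrancl_into_rtrancl)
      ultimately show False unfolding w'_def using not_less_Least by blast
    qed
    have "(p,v) \<in> rel y" using ey by auto
    then have "(p,w') \<in> rel y" using prio_conv[OF py, of p w' v] pw' w'le w2 by simp
    then have "(w',p) \<in> rel y" by (rule rel_sym)
    then have "\<exists>q. (q,w') \<in> y" using root_le[where F=y and n=n and s=w' and t=p] incy upy pw' by auto
    then obtain q where "(q,w') \<in> y" by blast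
    then have "v \<le> w'" using mn nq by fastforce
    then show False using w'le w2 by simp
  qed
  have relz: "(a,b) \<in> rel x \<or> ((a,p) \<in> rel x \<and> (v,b) \<in> rel x) \<or> ((a,v) \<in> rel x \<and> (p,b) \<in> rel x)"
    if "(a,b) \<in> rel z" for a b
    using that
  proof (induction rule: rtrancl_induct)
    case base then show ?case by simp
  next
    case (step b c)
    from step(2) have "(b,c) \<in> x \<union> x\<inverse> \<or> (b,c) = (p,v) \<or> (b,c) = (v,p)" unfolding z_def by auto
    then show ?case
    proof (elim disjE)
      assume bc: "(b,c) \<in> x \<union> x\<inverse>"
      then have "(b,c) \<in> rel x" by blast
      then show ?case using step(3) rel_trans by metis
    next
      assume "(b,c) = (p,v)"
      then show ?case using step(3) rel_trans rel_sym by (metis rtrancl.rtrancl_refl prod.inject)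
    next
      assume "(b,c) = (v,p)"
      then show ?case using step(3) rel_trans rel_sym by (metis rtrancl.rtrancl_refl prod.inject)
    qed
  qed
  have xz: "rel x \<subseteq> rel z" unfolding z_def by (rule rtrancl_mono) blast
  have pvz: "(p,v) \<in> rel z" unfolding z_def by blast
  have cv: "(a,w) \<in> rel z" if aw: "a \<le> w" and wb: "w \<le> b" and ab: "(a,b) \<in> rel z" for a w b
  proof -
    from relz[OF ab] show ?thesis
    proof (elim disjE conjE)
      assume "(a,b) \<in> rel x"
      then show ?thesis using prio_conv[OF px aw wb] xz by blast
    next
      assume ap: "(a,p) \<in> rel x" and vb: "(v,b) \<in> rel x"
      consider "w \<le> p" | "p < w \<and> w < v" | "v \<le> w" by linarith
      then show ?thesis
      proof cases
        case 1
        then show ?thesis using prio_conv[OF px aw _ ap] xz by blast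
      next
        case 2
        then have "(p,w) \<in> rel x" using key by blast
        then show ?thesis using ap rel_trans xz by blast
      next
        case 3
        then have "(v,w) \<in> rel x" using prio_conv[OF px _ wb vb] by blast
        moreover have "(a,v) \<in> rel z" using ap xz pvz rel_trans by blast
        ultimately show ?thesis using xz rel_trans by blast
      qed
    next
      assume av: "(a,v) \<in> rel x" and pb: "(p,b) \<in> rel x"
      have "v \<le> a" using xroot rel_sym[OF av] by blast
      then have "(p,v) \<in> rel x" using prio_conv[OF px _ _ pb] pv aw wb by simp
      then have "v \<le> p" using xroot rel_sym by blast
      then show ?thesis using pv by simp
    qed
  qed
  have incz: "z \<subseteq> {(a, b). a < b \<and> b \<le> n}" unfolding z_def using incx pv by auto
  have upz: "\<And>a a' b. (a,b) \<in> z \<Longrightarrow> (a',b) \<in> z \<Longrightarrow> a = a'" unfolding z_def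
    using upy xy ey by blast
  have "priority_forest n z"
    by (rule conv_prio[of z n]) (rule incz, rule upz, assumption+, rule cv, assumption+)
  then show ?thesis unfolding z_def .
qed

lemma mc_Nil: "\<not> max_chain cov x y []"
  unfolding max_chain_def by simp

lemma mc_single: "max_chain cov x y [a] \<longleftrightarrow> a = x \<and> a = y"
  unfolding max_chain_def by auto

lemma mc_cons2: "max_chain cov x y (a # b # cs) \<longleftrightarrow> a = x \<and> cov a b \<and> max_chain cov b y (b # cs)"
proof -
  have "(\<forall>i. Suc i < length (a # b # cs) \<longrightarrow> cov ((a # b # cs) ! i) ((a # b # cs) ! Suc i))
    \<longleftrightarrow> cov a b \<and> (\<forall>i. Suc i < length (b # cs) \<longrightarrow> cov ((b # cs) ! i) ((b # cs) ! Suc i))"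
    (is "?L \<longleftrightarrow> ?R")
  proof
    assume L: ?L
    show ?R
    proof
      show "cov a b" using L[rule_format, of 0] by simp
      show "\<forall>i. Suc i < length (b # cs) \<longrightarrow> cov ((b # cs) ! i) ((b # cs) ! Suc i)"
        using L by (metis Suc_less_eq length_Cons nth_Cons_Suc)
    qed
  next
    assume R: ?R
    show ?L
    proof (intro allI impI)
      fix i assume "Suc i < length (a # b # cs)"
      then show "cov ((a # b # cs) ! i) ((a # b # cs) ! Suc i)"
        using R by (cases i) auto
    qed
  qed
  then show ?thesis unfolding max_chain_def by auto
qed

lemma ls_single: "label_seq lab [a] = []"
  unfolding label_seq_def by simp

lemma ls_cons2: "label_seq lab (a # b # cs) = lab a b # label_seq lab (b # cs)"
proof -
  have "[0..<length (a # b # cs) - 1] = 0 # map Suc [0..<length (b # cs) - 1]"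
    by (simp add: upt_conv_Cons map_Suc_upt del: upt_Suc)
  then show ?thesis unfolding label_seq_def by simp
qed

lemma cover_step:
  assumes "covers_in S Q Q'"
  shows "\<exists>e. e \<notin> Q \<and> Q' = insert e Q \<and> forest_label Q Q' = snd e"
proof -
  from assms have sub: "Q \<subseteq> Q'" and c: "card (Q' - Q) = 1" unfolding covers_in_def by auto
  from c obtain e where e: "Q' - Q = {e}" by (rule card_1_singletonE)
  have "forest_label Q Q' = snd e" unfolding forest_label_def e by simp
  moreover have "Q' = insert e Q" using sub e by blast
  moreover have "e \<notin> Q" using e by blast
  ultimately show ?thesis by blast
qed

lemma chain_facts:
  assumes "max_chain (covers_in S) z y cs"
  shows "z \<subseteq> y \<and> set (label_seq forest_label cs) = snd ` (y - z)"
  using assms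
proof (induction cs arbitrary: z)
  case Nil then show ?case by (simp add: mc_Nil)
next
  case (Cons a cs)
  show ?case
  proof (cases cs)
    case Nil
    then show ?thesis using Cons.prems by (auto simp add: mc_single ls_single)
  next
    case (Cons b cs')
    with Cons.prems have az: "a = z" and cv: "covers_in S z b" and mc: "max_chain (covers_in S) b y (b # cs')"
      by (auto simp: mc_cons2)
    from cover_step[OF cv] obtain e where e: "e \<notin> z" "b = insert e z" "forest_label z b = snd e" by blast
    from Cons.IH[of b] mc Cons have ih: "b \<subseteq> y" "set (label_seq forest_label (b # cs')) = snd ` (y - b)"
      by auto
    have "y - z = insert e (y - b)" using e ih by blast
    then show ?thesis using ih e az Cons by (auto simp: ls_cons2)
  qed
qed

lemma fin_pf: "priority_forest n F \<Longrightarrow> finite F"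
proof -
  assume "priority_forest n F"
  then have "F \<subseteq> {..n} \<times> {..n}" using pf_inc[of n F] by auto
  then show "finite F" using finite_subset by blast
qed

lemma main_ind:
  assumes yS: "y \<in> lower_interval n P"
  shows "\<forall>x. x \<in> lower_interval n P \<longrightarrow> x \<subseteq> y \<longrightarrow> card (y - x) = k \<longrightarrow>
    (\<exists>cs. max_chain (covers_in (lower_interval n P)) x y cs \<and> sorted (label_seq forest_label cs) \<and>
      (\<forall>cs'. max_chain (covers_in (lower_interval n P)) x y cs' \<and> cs' \<noteq> cs \<longrightarrow>
         (label_seq forest_label cs, label_seq forest_label cs') \<in> lexord {(a, b). a < b} \<and>
         \<not> sorted (label_seq forest_label cs')))"
proof (induction k)
  let ?S = "lower_interval n P"
  let ?L = "label_seq forest_label"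
  have py: "priority_forest n y" and yP: "y \<subseteq> P" using yS unfolding lower_interval_def by auto
  have finy: "finite y" using fin_pf[OF py] .
  {
    case 0
    show ?case
    proof (intro allI impI)
      fix x assume xS: "x \<in> ?S" and xy: "x \<subseteq> y" and c: "card (y - x) = 0"
      have "y - x = {}" using c finy by simp
      then have xeq: "x = y" using xy by blast
      show "\<exists>cs. max_chain (covers_in ?S) x y cs \<and> sorted (?L cs) \<and>
        (\<forall>cs'. max_chain (covers_in ?S) x y cs' \<and> cs' \<noteq> cs \<longrightarrow>
           (?L cs, ?L cs') \<in> lexord {(a, b). a < b} \<and> \<not> sorted (?L cs'))"
      proof (intro exI[of _ "[x]"] conjI allI impI)
        show "max_chain (covers_in ?S) x y [x]" using xeq by (simp add: mc_single)
        show "sorted (?L [x])" by (simp add: ls_single)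
        fix cs' assume h: "max_chain (covers_in ?S) x y cs' \<and> cs' \<noteq> [x]"
        have False
        proof (cases cs')
          case Nil then show False using h by (simp add: mc_Nil)
        next
          case (Cons a r)
          show False
          proof (cases r)
            case Nil then show False using h Cons by (auto simp add: mc_single)
          next
            case (Cons b r')
            with h \<open>cs' = a # r\<close> have cv: "covers_in ?S x b" and mc: "max_chain (covers_in ?S) b y (b # r')"
              by (auto simp: mc_cons2)
            from cover_step[OF cv] obtain e where "e \<notin> x" "b = insert e x" by blast
            moreover have "b \<subseteq> y" using chain_facts[OF mc] by blast
            ultimately show False using xeq by blast
          qed
        qed
        then show "(?L [x], ?L cs') \<in> lexord {(a, b). a < b}" "\<not> sorted (?L cs')" by auto
      qed
    qed
  next
    case (Suc k)
    show ?case
    proof (intro allI impI)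
      fix x assume xS: "x \<in> ?S" and xy: "x \<subseteq> y" and c: "card (y - x) = Suc k"
      have px: "priority_forest n x" using xS unfolding lower_interval_def by auto
      have ne: "y - x \<noteq> {}" using c by (metis card.empty nat.distinct(1))
      have fin: "finite (y - x)" using finy by simp
      define v where "v = Min (snd ` (y - x))"
      have "v \<in> snd ` (y - x)" unfolding v_def using ne fin by simp
      then obtain p where pv: "(p,v) \<in> y" "(p,v) \<notin> x" by auto
      have mn: "\<And>e. e \<in> y - x \<Longrightarrow> v \<le> snd e" unfolding v_def using fin by simp
      define x' where "x' = insert (p,v) x"
      have px': "priority_forest n x'" unfolding x'_def by (rule add_edge[OF px py xy pv mn])
      have x'S: "x' \<in> ?S" using px' yP pv xS unfolding x'_def lower_interval_def by auto
      have x'y: "x' \<subseteq> y" using xy pv unfolding x'_def by auto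
      have "y - x = insert (p,v) (y - x')" using pv xy unfolding x'_def by blast
      then have c': "card (y - x') = k" using c fin unfolding x'_def
        by (metis Diff_iff card_insert_disjoint finite_Diff2 insertI1 nat.inject finite_insert)
      from Suc.IH x'S x'y c' obtain cs0 where
        mc0: "max_chain (covers_in ?S) x' y cs0" and s0: "sorted (?L cs0)"
        and oth: "\<And>cs'. max_chain (covers_in ?S) x' y cs' \<Longrightarrow> cs' \<noteq> cs0 \<Longrightarrow>
           (?L cs0, ?L cs') \<in> lexord {(a, b). a < b} \<and> \<not> sorted (?L cs')"
        by blast
      obtain r0 where cs0: "cs0 = x' # r0" using mc0 unfolding max_chain_def by (cases cs0) auto
      have dd: "x' - x = {(p,v)}" unfolding x'_def using pv by blast
      have cov: "covers_in ?S x x'" unfolding covers_in_def using xS x'S dd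
        by (auto simp: x'_def)
      have fl: "forest_label x x' = v" unfolding forest_label_def dd by simp
      have mc: "max_chain (covers_in ?S) x y (x # cs0)" using mc0 cov cs0 by (simp add: mc_cons2)
      have Lcs: "?L (x # cs0) = v # ?L cs0" using cs0 fl by (simp add: ls_cons2)
      have set0: "set (?L cs0) = snd ` (y - x')" using chain_facts[OF mc0] by blast
      have "\<forall>l \<in> set (?L cs0). v \<le> l" using set0 mn unfolding x'_def by auto
      then have srt: "sorted (?L (x # cs0))" using Lcs s0 by simp
      show "\<exists>cs. max_chain (covers_in ?S) x y cs \<and> sorted (?L cs) \<and>
        (\<forall>cs'. max_chain (covers_in ?S) x y cs' \<and> cs' \<noteq> cs \<longrightarrow>
           (?L cs, ?L cs') \<in> lexord {(a, b). a < b} \<and> \<not> sorted (?L cs'))"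
      proof (intro exI[of _ "x # cs0"] conjI allI impI)
        show "max_chain (covers_in ?S) x y (x # cs0)" by fact
        show "sorted (?L (x # cs0))" by fact
        fix cs' assume h: "max_chain (covers_in ?S) x y cs' \<and> cs' \<noteq> x # cs0"
        obtain b r' where cs': "cs' = x # b # r'"
        proof (cases cs')
          case Nil then show ?thesis using h by (simp add: mc_Nil)
        next
          case (Cons a r)
          then have ax: "a = x" using h unfolding max_chain_def by simp
          show ?thesis
          proof (cases r)
            case Nil then show ?thesis using h Cons ne xy by (auto simp: mc_single)
          next
            case (Cons b r') then show ?thesis using that \<open>cs' = a # r\<close> ax by simp
          qed
        qed
        with h have cvb: "covers_in ?S x b" and mcb: "max_chain (covers_in ?S) b y (b # r')"
          by (auto simp: mc_cons2)
        from cover_step[OF cvb] obtain e where e: "e \<notin> x" "b = insert e x" "forest_label x b = snd e"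
          by blast
        have by': "b \<subseteq> y" and setb: "set (?L (b # r')) = snd ` (y - b)" using chain_facts[OF mcb] by auto
        have ey: "e \<in> y" using by' e by blast
        have Lcs': "?L cs' = snd e # ?L (b # r')" using cs' e by (simp add: ls_cons2)
        have res: "(?L (x # cs0), ?L cs') \<in> lexord {(a, b). a < b} \<and> \<not> sorted (?L cs')"
        proof (cases "e = (p,v)")
          case True
          then have bx': "b = x'" using e unfolding x'_def by simp
          then have "b # r' \<noteq> cs0" using h cs' by auto
          then have "(?L cs0, ?L (b # r')) \<in> lexord {(a, b). a < b} \<and> \<not> sorted (?L (b # r'))"
            using oth mcb bx' by blast
          then show ?thesis using Lcs Lcs' True by simp
        next
          case False
          have "snd e \<noteq> v"
          proof
            assume "snd e = v"
            then have "e = (fst e, v)" by (metis prod.collapse)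
            then have "fst e = p" using pf_up[OF py] ey pv by metis
            then show False using False \<open>snd e = v\<close> by (metis prod.collapse)
          qed
          moreover have "v \<le> snd e" using mn ey e by blast
          ultimately have lt: "v < snd e" by simp
          have "(p,v) \<in> y - b" using pv e False by blast
          then have "v \<in> set (?L (b # r'))" using setb by force
          then have "\<not> sorted (?L cs')" using Lcs' lt by (auto dest!: bspec[where x=v])
          moreover have "(?L (x # cs0), ?L cs') \<in> lexord {(a, b). a < b}"
            using Lcs Lcs' lt by simp
          ultimately show ?thesis by blast
        qed
        then show "(?L (x # cs0), ?L cs') \<in> lexord {(a, b). a < b}" "\<not> sorted (?L cs')" by auto
      qed
    qed
  }
qed

theorem lemma5p7:
  fixes n :: nat and P :: "(nat \<times> nat) set"
  assumes "priority_forest n P"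
  shows "EL_labeling (lower_interval n P) (\<subseteq>) (covers_in (lower_interval n P)) forest_label"
  unfolding EL_labeling_def
proof (intro ballI impI)
  let ?S = "lower_interval n P"
  let ?L = "label_seq forest_label"
  fix x y assume xS: "x \<in> ?S" and yS: "y \<in> ?S" and xy: "x \<subseteq> y"
  from main_ind[OF yS, of "card (y - x)"] xS xy obtain cs where
    mc: "max_chain (covers_in ?S) x y cs" and s: "sorted (?L cs)"
    and oth: "\<And>cs'. max_chain (covers_in ?S) x y cs' \<Longrightarrow> cs' \<noteq> cs \<Longrightarrow>
         (?L cs, ?L cs') \<in> lexord {(a, b). a < b} \<and> \<not> sorted (?L cs')"
    by blast
  have uq: "\<And>cs'. max_chain (covers_in ?S) x y cs' \<Longrightarrow> sorted (?L cs') \<Longrightarrow> cs' = cs"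
    using oth by blast
  show "(\<exists>!cs. max_chain (covers_in ?S) x y cs \<and> sorted (?L cs)) \<and>
        (\<forall>cs cs'. max_chain (covers_in ?S) x y cs \<and> sorted (?L cs) \<and>
                  max_chain (covers_in ?S) x y cs' \<and> cs' \<noteq> cs \<longrightarrow>
                  (?L cs, ?L cs') \<in> lexord {(a, b). a < b})"
  proof
    show "\<exists>!cs. max_chain (covers_in ?S) x y cs \<and> sorted (?L cs)"
      using mc s uq by blast
    show "\<forall>cs cs'. max_chain (covers_in ?S) x y cs \<and> sorted (?L cs) \<and>
                  max_chain (covers_in ?S) x y cs' \<and> cs' \<noteq> cs \<longrightarrow>
                  (?L cs, ?L cs') \<in> lexord {(a, b). a < b}"
    proof (intro allI impI)
      fix c1 c2 assume h: "max_chain (covers_in ?S) x y c1 \<and> sorted (?L c1) \<and>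
                  max_chain (covers_in ?S) x y c2 \<and> c2 \<noteq> c1"
      then have "c1 = cs" using uq by blast
      then show "(?L c1, ?L c2) \<in> lexord {(a, b). a < b}" using oth h by blast
    qed
  qed
qed

end
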